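(* Let $\alpha:A^{\Delta}\to(H_1,V_1)$ and $\beta:A^{\Delta}\to(H_2,V_2)$ be homomorphisms onto finite forest algebras (with idempotent and commutative horizontal monoids) such that $\beta$ factors through $\alpha$. If $\alpha$ is nonconfusing, then so is $\beta$.
   Context: $A^{\Delta}=(H_A,V_A)$: free forest algebra of forests (finite ordered sequences of finite ordered $A$-labelled trees, under concatenation) and contexts (forests with one hole, acting by substitution) over $A$. A forest algebra $(H,V)$: additive monoid $H$, monoid $V$ acting faithfully on the left, containing $g\mapsto g+h$, $g\mapsto h+g$. $\beta$ factors through $\alpha$ if $\alpha(s)=\alpha(s')$ implies $\beta(s)=\beta(s')$. Reachability in $(H,V)$: $h\le h'$ iff $h=vh'$ for some $v\in V$; reachability classes are classes of mutual reachability; $h>\Gamma$ means the class of $h$ is strictly above $\Gamma$. For $\gamma:A^{\Delta}\to(H,V)$ and a class $\Gamma$, $\gamma_\Gamma:A^{\Delta}\to(H_\Gamma,V_\Gamma)$ is the quotient identifying all elements of $\{h:h\not>\Gamma\}$ to one absorbing element $\infty$. For a forest $s$, $s^{\gamma_\Gamma}$ relabels each node whose subtree is $at$ by $(a,\gamma_\Gamma(t))$. For an alphabet $B$, $\sim_0$ is total on forests over $B$, and $s\sim_{k+1}s'$ iff $\{(b_i,[s_i]_{\sim_k})\}$ coincide where $s=b_1s_1+\cdots+b_rs_r$. $s_1\equiv_{\gamma,k,\Gamma}s_2$ iff $(s_1)^{\gamma_\Gamma}\sim_k(s_2)^{\gamma_\Gamma}$ and $\gamma(s_1),\gamma(s_2)\in\Gamma$.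 $\gamma$ is nonconfusing if there exists $k>0$ such that for every reachability class $\Gamma$ of the target algebra, $s_1\equiv_{\gamma,k,\Gamma}s_2$ implies $\gamma(s_1)=\gamma(s_2)$. *)

theory Defs
  imports Main
begin

datatype 'a tree = Node (label: 'a) (children: "'a tree list")

type_synonym 'a forest = "'a tree list"

text \<open>Contexts: forests with exactly one hole.
  Hole l r is the context l + [] + r;
  CNode l a c r is the context l + a(c) + r.\<close>
datatype 'a ctx = Hole "'a forest" "'a forest" | CNode "'a forest" 'a "'a ctx" "'a forest"

fun fill :: "'a ctx \<Rightarrow> 'a forest \<Rightarrow> 'a forest" where
  "fill (Hole l r) t = l @ t @ r"
| "fill (CNode l a c r) t = l @ [Node a (fill c t)] @ r"

fun comp :: "'a ctx \<Rightarrow> 'a ctx \<Rightarrow> 'a ctx" where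
  "comp (Hole l r) (Hole l' r') = Hole (l @ l') (r' @ r)"
| "comp (Hole l r) (CNode l' a c r') = CNode (l @ l') a c (r' @ r)"
| "comp (CNode l a c r) q = CNode l a (comp c q) r"

abbreviation empty_ctx :: "'a ctx" where "empty_ctx \<equiv> Hole [] []"

text \<open>A forest algebra (H,V): H is the whole carrier type 'h with its additive monoid
  structure; since V acts faithfully on H, V is represented as a set of functions
  H \<Rightarrow> H (the monoid operation being composition, the action application).\<close>
definition forest_algebra :: "('h::monoid_add \<Rightarrow> 'h) set \<Rightarrow> bool" where
  "forest_algebra V \<longleftrightarrow> id \<in> V \<and> (\<forall>f\<in>V. \<forall>g\<in>V. f \<circ> g \<in> V)
     \<and> (\<forall>h. (\<lambda>g. g + h) \<in> V \<and> (\<lambda>g. h + g) \<in> V)"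

definition fa_hom :: "('a forest \<Rightarrow> 'h::monoid_add) \<Rightarrow> ('a ctx \<Rightarrow> 'h \<Rightarrow> 'h)
    \<Rightarrow> ('h \<Rightarrow> 'h) set \<Rightarrow> bool" where
  "fa_hom gH gV V \<longleftrightarrow> (\<forall>p. gV p \<in> V)
     \<and> gH [] = 0 \<and> (\<forall>s t. gH (s @ t) = gH s + gH t)
     \<and> gV empty_ctx = id \<and> (\<forall>p q. gV (comp p q) = gV p \<circ> gV q)
     \<and> (\<forall>p t. gH (fill p t) = gV p (gH t))"

definition fa_onto :: "('a forest \<Rightarrow> 'h) \<Rightarrow> ('a ctx \<Rightarrow> 'h \<Rightarrow> 'h) \<Rightarrow> ('h \<Rightarrow> 'h) set \<Rightarrow> bool" where
  "fa_onto gH gV V \<longleftrightarrow> surj gH \<and> range gV = V"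

definition factors_through ::
  "('a forest \<Rightarrow> 'h2) \<Rightarrow> ('a ctx \<Rightarrow> 'h2 \<Rightarrow> 'h2) \<Rightarrow> ('a forest \<Rightarrow> 'h1) \<Rightarrow> ('a ctx \<Rightarrow> 'h1 \<Rightarrow> 'h1) \<Rightarrow> bool" where
  "factors_through bH bV aH aV \<longleftrightarrow>
     (\<forall>s s'. aH s = aH s' \<longrightarrow> bH s = bH s') \<and> (\<forall>p p'. aV p = aV p' \<longrightarrow> bV p = bV p')"

definition reach :: "('h \<Rightarrow> 'h) set \<Rightarrow> 'h \<Rightarrow> 'h \<Rightarrow> bool" where
  "reach V h h' \<longleftrightarrow> (\<exists>v\<in>V. h = v h')"

definition reach_class_of :: "('h \<Rightarrow> 'h) set \<Rightarrow> 'h \<Rightarrow> 'h set" where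
  "reach_class_of V h = {h'. reach V h h' \<and> reach V h' h}"

definition reach_classes :: "('h \<Rightarrow> 'h) set \<Rightarrow> 'h set set" where
  "reach_classes V = range (reach_class_of V)"

definition above :: "('h \<Rightarrow> 'h) set \<Rightarrow> 'h \<Rightarrow> 'h set \<Rightarrow> bool" where
  "above V h \<Gamma> \<longleftrightarrow> (\<forall>g\<in>\<Gamma>. reach V g h \<and> \<not> reach V h g)"

text \<open>gamma_Gamma on forests: all values not above Gamma are identified to the absorbing
  element infinity (represented by None).\<close>
definition gamma_Gamma :: "('a forest \<Rightarrow> 'h) \<Rightarrow> ('h \<Rightarrow> 'h) set \<Rightarrow> 'h set \<Rightarrow> 'a forest \<Rightarrow> 'h option" where
  "gamma_Gamma gH V \<Gamma> t = (if above V (gH t) \<Gamma> then Some (gH t) else None)"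

fun relabel :: "('a forest \<Rightarrow> 'c) \<Rightarrow> 'a tree \<Rightarrow> ('a \<times> 'c) tree" where
  "relabel f (Node a t) = Node (a, f t) (map (relabel f) t)"

definition relabel_forest :: "('a forest \<Rightarrow> 'c) \<Rightarrow> 'a forest \<Rightarrow> ('a \<times> 'c) forest" where
  "relabel_forest f s = map (relabel f) s"

primrec sim :: "nat \<Rightarrow> 'b forest \<Rightarrow> 'b forest \<Rightarrow> bool" where
  "sim 0 = (\<lambda>s s'. True)"
| "sim (Suc k) = (\<lambda>s s'.
      (\<lambda>x. (label x, {u. sim k (children x) u})) ` set s
    = (\<lambda>x. (label x, {u. sim k (children x) u})) ` set s')"

definition equiv_k :: "('a forest \<Rightarrow> 'h) \<Rightarrow> ('h \<Rightarrow> 'h) set \<Rightarrow> nat \<Rightarrow> 'h set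
    \<Rightarrow> 'a forest \<Rightarrow> 'a forest \<Rightarrow> bool" where
  "equiv_k gH V k \<Gamma> s1 s2 \<longleftrightarrow>
     sim k (relabel_forest (gamma_Gamma gH V \<Gamma>) s1) (relabel_forest (gamma_Gamma gH V \<Gamma>) s2)
     \<and> gH s1 \<in> \<Gamma> \<and> gH s2 \<in> \<Gamma>"

definition nonconfusing :: "('a forest \<Rightarrow> 'h) \<Rightarrow> ('h \<Rightarrow> 'h) set \<Rightarrow> bool" where
  "nonconfusing gH V \<longleftrightarrow> (\<exists>k>0. \<forall>\<Gamma>\<in>reach_classes V. \<forall>s1 s2.
      equiv_k gH V k \<Gamma> s1 s2 \<longrightarrow> gH s1 = gH s2)"

end

theory Submission
  imports Defs
begin


lemma sim_refl: "sim k s s" by (cases k) auto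
lemma sim_sym: "sim k s t \<Longrightarrow> sim k t s" by (cases k) auto
lemma sim_trans: "sim k s t \<Longrightarrow> sim k t u \<Longrightarrow> sim k s u" by (cases k) auto

lemma sim_set_eq: "({u. sim k a u} = {u. sim k b u}) = sim k a b"
proof
  assume "{u. sim k a u} = {u. sim k b u}"
  then show "sim k a b" using sim_refl[of k b] by blast
next
  assume "sim k a b"
  then show "{u. sim k a u} = {u. sim k b u}" using sim_sym sim_trans by blast
qed

lemma fa_reach_refl: "forest_algebra V \<Longrightarrow> reach V h h"
  unfolding forest_algebra_def reach_def by (metis id_apply)
lemma fa_reach_trans: "forest_algebra V \<Longrightarrow> reach V a b \<Longrightarrow> reach V b c \<Longrightarrow> reach V a c"
  unfolding forest_algebra_def reach_def by (metis comp_apply)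

lemma hom_in: "fa_hom gH gV V \<Longrightarrow> gV p \<in> V" unfolding fa_hom_def by blast
lemma hom_nil: "fa_hom gH gV V \<Longrightarrow> gH [] = 0" unfolding fa_hom_def by blast
lemma hom_app: "fa_hom gH gV V \<Longrightarrow> gH (s @ t) = gH s + gH t" unfolding fa_hom_def by blast
lemma hom_fill: "fa_hom gH gV V \<Longrightarrow> gH (fill p t) = gV p (gH t)" unfolding fa_hom_def by blast
lemma hom_cons: "fa_hom gH gV V \<Longrightarrow> gH (x # xs) = gH [x] + gH xs"
  using hom_app[of gH gV V "[x]" xs] by simp
lemma hom_node: "fa_hom gH gV V \<Longrightarrow> gH [Node a u] = gV (CNode [] a (Hole [] []) []) (gH u)"
  using hom_fill[of gH gV V "CNode [] a (Hole [] []) []" u] by simp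
lemma hom_ctx: "fa_hom gH gV V \<Longrightarrow> gH (l @ Node a u # r) = gV (CNode l a (Hole [] []) r) (gH u)"
  using hom_fill[of gH gV V "CNode l a (Hole [] []) r" u] by simp
lemma hom_elem: "fa_hom gH gV V \<Longrightarrow> gH (l @ x # r) = gV (Hole l r) (gH [x])"
  using hom_fill[of gH gV V "Hole l r" "[x]"] by simp
lemma hom_sum: assumes "fa_hom gH gV V" shows "gH s = sum_list (map (\<lambda>x. gH [x]) s)"
proof (induction s)
  case Nil then show ?case using hom_nil[OF \<open>fa_hom gH gV V\<close>] by simp
next
  case (Cons x s) then show ?case using hom_cons[OF \<open>fa_hom gH gV V\<close>, of x s] by simp
qed

lemma sum_list_absorb:
  fixes xs :: "'h::comm_monoid_add list"
  assumes idem: "\<forall>x::'h. x + x = x" and "y \<in> set xs"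
  shows "y + sum_list xs = sum_list xs"
  using assms(2)
proof (induction xs)
  case Nil then show ?case by simp
next
  case (Cons x xs)
  show ?case
  proof (cases "y = x")
    case True
    have "x + (x + sum_list xs) = (x + x) + sum_list xs" by (rule add.assoc[symmetric])
    then show ?thesis using idem True by simp
  next
    case False
    then have "y \<in> set xs" using Cons by simp
    then have "y + sum_list xs = sum_list xs" using Cons by simp
    then show ?thesis using add.left_commute[of y x "sum_list xs"] by simp
  qed
qed

lemma sum_list_sub:
  fixes xs ys :: "'h::comm_monoid_add list"
  assumes idem: "\<forall>x::'h. x + x = x" and "set ys \<subseteq> set xs"
  shows "sum_list ys + sum_list xs = sum_list xs"
  using assms(2)
proof (induction ys)
  case Nil then show ?case by simp
next
  case (Cons y ys)
  then have "sum_list ys + sum_list xs = sum_list xs" by simp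
  moreover have "y + sum_list xs = sum_list xs" using sum_list_absorb[OF idem] Cons by simp
  ultimately show ?case by (simp add: add.assoc)
qed

lemma sum_list_set:
  fixes xs ys :: "'h::comm_monoid_add list"
  assumes idem: "\<forall>x::'h. x + x = x" and "set xs = set ys"
  shows "sum_list xs = sum_list ys"
proof -
  have "sum_list xs = sum_list ys + sum_list xs" using sum_list_sub[OF idem, of ys xs] assms by simp
  also have "\<dots> = sum_list xs + sum_list ys" by (simp add: add.commute)
  also have "\<dots> = sum_list ys" using sum_list_sub[OF idem, of xs ys] assms by simp
  finally show ?thesis .
qed

lemma hom_set_eq:
  fixes gH :: "'a forest \<Rightarrow> 'h::comm_monoid_add"
  assumes "fa_hom gH gV V" and "\<forall>x::'h::comm_monoid_add. x + x = x"
    and "(\<lambda>x. gH [x]) ` set s1 = (\<lambda>x. gH [x]) ` set s2"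
  shows "gH s1 = gH s2"
proof -
  have "set (map (\<lambda>x. gH [x]) s1) = set (map (\<lambda>x. gH [x]) s2)" using assms(3) by simp
  then have "sum_list (map (\<lambda>x. gH [x]) s1) = sum_list (map (\<lambda>x. gH [x]) s2)"
    by (rule sum_list_set[OF assms(2)])
  then show ?thesis using hom_sum[OF assms(1)] by metis
qed

lemma label_relabel[simp]: "label (relabel f x) = (label x, f (children x))"
  by (cases x) simp
lemma children_relabel[simp]: "children (relabel f x) = relabel_forest f (children x)"
  by (cases x) (simp add: relabel_forest_def)

lemma sim_Suc_rel: "sim (Suc k) (relabel_forest f s) (relabel_forest f' s') =
  ((\<lambda>x. ((label x, f (children x)), {u. sim k (relabel_forest f (children x)) u})) ` set s =
   (\<lambda>x. ((label x, f' (children x)), {u. sim k (relabel_forest f' (children x)) u})) ` set s')"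
  by (simp add: relabel_forest_def image_image)



locale L6 =
  fixes aH :: "'a forest \<Rightarrow> 'h1::comm_monoid_add" and aV :: "'a ctx \<Rightarrow> 'h1 \<Rightarrow> 'h1"
    and V1 :: "('h1 \<Rightarrow> 'h1) set"
    and bH :: "'a forest \<Rightarrow> 'h2::comm_monoid_add" and bV :: "'a ctx \<Rightarrow> 'h2 \<Rightarrow> 'h2"
    and V2 :: "('h2 \<Rightarrow> 'h2) set"
    and G2 :: "'h2 set" and E :: "'h1 set" and pi :: "'h1 \<Rightarrow> 'h2"
    and c :: "'h2 \<Rightarrow> 'a forest" and w :: "'h2 \<Rightarrow> 'a forest"
  assumes fa1: "forest_algebra V1" and fa2: "forest_algebra V2"
    and idem1: "\<forall>x::'h1. x + x = x"
    and hom1: "fa_hom aH aV V1" and hom2: "fa_hom bH bV V2"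
    and piH: "\<And>s. bH s = pi (aH s)"
    and Emin: "\<And>e h. e \<in> E \<Longrightarrow> reach V1 h e \<Longrightarrow> pi h \<in> G2 \<Longrightarrow> h \<in> E"
    and cdef: "\<And>h. bH (c h) = h" and wdef: "\<And>h. bH (w h) = h"
    and wE: "\<And>h. h \<in> G2 \<Longrightarrow> aH (w h) \<in> E"
begin

abbreviation ab where "ab t \<equiv> above V2 (bH t) G2"

primrec T :: "nat \<Rightarrow> 'a forest \<Rightarrow> 'a forest" where
  "T 0 s = s"
| "T (Suc m) s = map (\<lambda>x. Node (label x) (if ab (children x) then c (bH (children x))
      else if m = 0 then w (bH (children x)) else T m (children x))) s"

definition new where "new m x = (if ab (children x) then c (bH (children x))
      else if m = 0 then w (bH (children x)) else T m (children x))"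

lemma T_Suc': "T (Suc m) s = map (\<lambda>x. Node (label x) (new m x)) s"
  by (simp add: new_def)

declare T.simps(2)[simp del]

primrec deep :: "nat \<Rightarrow> 'a forest \<Rightarrow> bool" where
  "deep 0 s = False"
| "deep (Suc m) s = (\<exists>x\<in>set s. \<not> ab (children x) \<and> (m = 0 \<or> deep m (children x)))"

definition dn where "dn m x = (\<not> ab (children x) \<and> (m = 0 \<or> deep m (children x)))"

lemma deep_Suc': "deep (Suc m) s = (\<exists>x\<in>set s. dn m x)"
  by (simp add: dn_def)

fun goodt :: "'a tree \<Rightarrow> bool" where
  "goodt (Node a t) = ((bH t \<in> G2 \<or> ab t) \<and> (\<forall>y\<in>set t. goodt y))"

lemma goodt_ch: "goodt x \<Longrightarrow> \<forall>y\<in>set (children x). goodt y"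
  by (cases x) simp
lemma goodt_G2: "goodt x \<Longrightarrow> \<not> ab (children x) \<Longrightarrow> bH (children x) \<in> G2"
  by (cases x) simp

abbreviation labB where "labB \<equiv> gamma_Gamma bH V2 G2"
abbreviation labA where "labA \<equiv> gamma_Gamma aH V1 E"
abbreviation relB where "relB \<equiv> relabel_forest labB"
abbreviation relA where "relA \<equiv> relabel_forest labA"

lemma bH_node: "bH (x # s) = bV (CNode [] (label x) (Hole [] []) []) (bH (children x)) + bH s"
  using hom_cons[OF hom2, of x s] hom_node[OF hom2, of "label x" "children x"] by (cases x) simp

lemma bH_T: "bH (T n s) = bH s"
proof (induction n arbitrary: s)
  case 0 then show ?case by simp
next
  case (Suc m)
  have nw: "bH (new m x) = bH (children x)" for x
    using Suc cdef wdef by (simp add: new_def)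
  show ?case
  proof (induction s)
    case Nil then show ?case by (simp add: T_Suc')
  next
    case (Cons x s)
    have "bH (T (Suc m) (x # s)) = bH (Node (label x) (new m x) # T (Suc m) s)"
      by (simp add: T_Suc')
    also have "\<dots> = bV (CNode [] (label x) (Hole [] []) []) (bH (children x)) + bH (T (Suc m) s)"
      using bH_node[of "Node (label x) (new m x)"] nw by simp
    also have "\<dots> = bH (x # s)" using Cons bH_node by simp
    finally show ?case .
  qed
qed

lemma reach1_refl: "reach V1 h h" using fa_reach_refl[OF fa1] .
lemma reach1_trans: "reach V1 a b \<Longrightarrow> reach V1 b d \<Longrightarrow> reach V1 a d"
  using fa_reach_trans[OF fa1] by blast

lemma Deep: "(\<forall>x\<in>set s. goodt x) \<Longrightarrow> deep n s \<Longrightarrow> \<exists>e\<in>E. reach V1 (aH (T n s)) e"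
proof (induction n arbitrary: s)
  case 0 then show ?case by simp
next
  case (Suc m)
  then obtain x where x: "x \<in> set s" "dn m x" unfolding deep_Suc' by blast
  then obtain l r where s: "s = l @ x # r" by (meson split_list)
  let ?F = "\<lambda>x. Node (label x) (new m x)"
  have "T (Suc m) s = map ?F l @ Node (label x) (new m x) # map ?F r"
    by (simp add: T_Suc' s)
  then have "aH (T (Suc m) s) = aV (CNode (map ?F l) (label x) (Hole [] []) (map ?F r)) (aH (new m x))"
    using hom_ctx[OF hom1] by simp
  then have r1: "reach V1 (aH (T (Suc m) s)) (aH (new m x))"
    unfolding reach_def using hom_in[OF hom1] by blast
  have gx: "goodt x" using Suc.prems x by blast
  have nab: "\<not> ab (children x)" using x by (simp add: dn_def)
  show ?case
  proof (cases "m = 0")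
    case True
    then have "new m x = w (bH (children x))" using nab by (simp add: new_def)
    moreover have "aH (w (bH (children x))) \<in> E" using wE goodt_G2[OF gx nab] by blast
    ultimately show ?thesis using r1 by auto
  next
    case False
    then have "new m x = T m (children x)" using nab by (simp add: new_def)
    moreover have "deep m (children x)" using x False by (simp add: dn_def)
    ultimately obtain e where "e \<in> E" "reach V1 (aH (new m x)) e"
      using Suc.IH[of "children x"] goodt_ch[OF gx] by auto
    then show ?thesis using r1 reach1_trans by blast
  qed
qed

lemma inE: "(\<forall>x\<in>set s. goodt x) \<Longrightarrow> deep n s \<Longrightarrow> bH s \<in> G2 \<Longrightarrow> aH (T n s) \<in> E"
  using Deep[of s n] Emin piH bH_T by metis

lemma labA_E: "aH u \<in> E \<Longrightarrow> labA u = None"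
  unfolding gamma_Gamma_def above_def using reach1_refl by auto

definition Pm where "Pm m \<longleftrightarrow> (\<forall>s1 s2. (\<forall>x\<in>set s1. goodt x) \<longrightarrow> (\<forall>x\<in>set s2. goodt x)
   \<longrightarrow> sim m (relB s1) (relB s2) \<longrightarrow>
   sim m (relA (T m s1)) (relA (T m s2)) \<and> deep m s1 = deep m s2
   \<and> (\<not> deep m s1 \<longrightarrow> aH (T m s1) = aH (T m s2)))"

lemma H:
  assumes IH: "0 < m \<longrightarrow> Pm m" and g1: "goodt x1" and g2: "goodt x2"
    and lb: "labB (children x1) = labB (children x2)"
    and sm: "sim m (relB (children x1)) (relB (children x2))"
  shows "labA (new m x1) = labA (new m x2) \<and> sim m (relA (new m x1)) (relA (new m x2))
    \<and> dn m x1 = dn m x2 \<and> (\<not> dn m x1 \<longrightarrow> aH (new m x1) = aH (new m x2))"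
proof -
  let ?t1 = "children x1" and ?t2 = "children x2"
  have abeq: "ab ?t1 = ab ?t2" using lb unfolding gamma_Gamma_def by (auto split: if_splits)
  show ?thesis
  proof (cases "ab ?t1")
    case True
    then have "bH ?t1 = bH ?t2" using lb unfolding gamma_Gamma_def by (auto split: if_splits)
    then have "new m x1 = new m x2" using True abeq by (simp add: new_def)
    then show ?thesis using True abeq sim_refl by (simp add: dn_def)
  next
    case False
    then have nab2: "\<not> ab ?t2" using abeq by simp
    have G1: "bH ?t1 \<in> G2" using goodt_G2[OF g1 False] .
    have G2': "bH ?t2 \<in> G2" using goodt_G2[OF g2 nab2] .
    show ?thesis
    proof (cases "m = 0")
      case True
      then have n1: "new m x1 = w (bH ?t1)" and n2: "new m x2 = w (bH ?t2)"
        using False nab2 by (simp_all add: new_def)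
      have "labA (new m x1) = None" "labA (new m x2) = None"
        using labA_E wE G1 G2' n1 n2 by auto
      then show ?thesis using True False nab2 by (simp add: dn_def)
    next
      case m: False
      then have n1: "new m x1 = T m ?t1" and n2: "new m x2 = T m ?t2"
        using False nab2 by (simp_all add: new_def)
      have P: "sim m (relA (T m ?t1)) (relA (T m ?t2)) \<and> deep m ?t1 = deep m ?t2
        \<and> (\<not> deep m ?t1 \<longrightarrow> aH (T m ?t1) = aH (T m ?t2))"
        using IH m goodt_ch[OF g1] goodt_ch[OF g2] sm unfolding Pm_def by blast
      have dn1: "dn m x1 = deep m ?t1" and dn2: "dn m x2 = deep m ?t2"
        using m False nab2 by (simp_all add: dn_def)
      have "labA (new m x1) = labA (new m x2)"
      proof (cases "deep m ?t1")
        case True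
        then have "aH (T m ?t1) \<in> E" "aH (T m ?t2) \<in> E"
          using inE goodt_ch[OF g1] goodt_ch[OF g2] G1 G2' P by auto
        then show ?thesis using labA_E n1 n2 by simp
      next
        case False
        then show ?thesis using P n1 n2 unfolding gamma_Gamma_def by simp
      qed
      then show ?thesis using P n1 n2 dn1 dn2 by simp
    qed
  qed
qed

end

context L6 begin

lemma M:
  assumes IH: "0 < m \<longrightarrow> Pm m" and g1: "\<forall>x\<in>set s1. goodt x" and g2: "\<forall>x\<in>set s2. goodt x"
    and sm: "sim (Suc m) (relB s1) (relB s2)" and x1: "x1 \<in> set s1"
  shows "\<exists>x2\<in>set s2. label x1 = label x2 \<and> labA (new m x1) = labA (new m x2)
    \<and> sim m (relA (new m x1)) (relA (new m x2))
    \<and> dn m x1 = dn m x2 \<and> (\<not> dn m x1 \<longrightarrow> aH (new m x1) = aH (new m x2))"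
proof -
  let ?k = "\<lambda>x. ((label x, labB (children x)), {u. sim m (relB (children x)) u})"
  have "?k ` set s1 = ?k ` set s2" using sm unfolding sim_Suc_rel .
  then have "?k x1 \<in> ?k ` set s2" using x1 by blast
  then obtain x2 where x2: "x2 \<in> set s2" "?k x1 = ?k x2" by blast
  then have e: "label x1 = label x2" "labB (children x1) = labB (children x2)"
    "sim m (relB (children x1)) (relB (children x2))" using sim_set_eq by auto
  show ?thesis using H[OF IH g1[rule_format, OF x1] g2[rule_format, OF x2(1)] e(2) e(3)] e(1) x2(1)
    by blast
qed

lemma Pm_Suc: assumes IH: "0 < m \<Longrightarrow> Pm m" shows "Pm (Suc m)"
  unfolding Pm_def
proof (intro allI impI)
  fix s1 s2
  assume g1: "\<forall>x\<in>set s1. goodt x" and g2: "\<forall>x\<in>set s2. goodt x"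
    and sm: "sim (Suc m) (relB s1) (relB s2)"
  have sm': "sim (Suc m) (relB s2) (relB s1)" using sim_sym[OF sm] .
  have IH': "0 < m \<longrightarrow> Pm m" using IH by blast
  note M1 = M[OF IH' g1 g2 sm] and M2 = M[OF IH' g2 g1 sm']
  let ?F = "\<lambda>x. Node (label x) (new m x)"
  let ?k = "\<lambda>x. ((label x, labA (children x)), {u. sim m (relA (children x)) u})"
  have i: "?k ` set (map ?F s1) = ?k ` set (map ?F s2)"
  proof (intro equalityI subsetI)
    fix y assume "y \<in> ?k ` set (map ?F s1)"
    then obtain x1 where x1: "x1 \<in> set s1" "y = ?k (?F x1)" by auto
    from M1[OF x1(1)] obtain x2 where x2: "x2 \<in> set s2" "label x1 = label x2"
      "labA (new m x1) = labA (new m x2)" "sim m (relA (new m x1)) (relA (new m x2))" by blast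
    have ss: "{u. sim m (relA (new m x1)) u} = {u. sim m (relA (new m x2)) u}"
      using sim_set_eq x2(4) by blast
    have yy: "y = ?k (?F x2)" unfolding x1(2) using x2(2,3) ss by simp
    have "?F x2 \<in> set (map ?F s2)" using x2(1) by simp
    then show "y \<in> ?k ` set (map ?F s2)" using yy by blast
  next
    fix y assume "y \<in> ?k ` set (map ?F s2)"
    then obtain x1 where x1: "x1 \<in> set s2" "y = ?k (?F x1)" by auto
    from M2[OF x1(1)] obtain x2 where x2: "x2 \<in> set s1" "label x1 = label x2"
      "labA (new m x1) = labA (new m x2)" "sim m (relA (new m x1)) (relA (new m x2))" by blast
    have ss: "{u. sim m (relA (new m x1)) u} = {u. sim m (relA (new m x2)) u}"
      using sim_set_eq x2(4) by blast
    have yy: "y = ?k (?F x2)" unfolding x1(2) using x2(2,3) ss by simp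
    have "?F x2 \<in> set (map ?F s1)" using x2(1) by simp
    then show "y \<in> ?k ` set (map ?F s1)" using yy by blast
  qed
  have S: "sim (Suc m) (relA (T (Suc m) s1)) (relA (T (Suc m) s2))"
    unfolding T_Suc' sim_Suc_rel using i by simp
  have D: "deep (Suc m) s1 = deep (Suc m) s2"
    unfolding deep_Suc' using M1 M2 by metis
  have A: "aH (T (Suc m) s1) = aH (T (Suc m) s2)" if nd: "\<not> deep (Suc m) s1"
  proof -
    have nd2: "\<not> deep (Suc m) s2" using nd D by blast
    have ndx1: "\<not> dn m x" if "x \<in> set s1" for x using nd that unfolding deep_Suc' by blast
    have ndx2: "\<not> dn m x" if "x \<in> set s2" for x using nd2 that unfolding deep_Suc' by blast
    have nd_eq: "aH [?F x] = aV (CNode [] (label x) (Hole [] []) []) (aH (new m x))" for x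
      using hom_node[OF hom1] by simp
    have "(\<lambda>x. aH [x]) ` set (map ?F s1) = (\<lambda>x. aH [x]) ` set (map ?F s2)"
    proof (intro equalityI subsetI)
      fix y assume "y \<in> (\<lambda>x. aH [x]) ` set (map ?F s1)"
      then obtain x1 where x1: "x1 \<in> set s1" "y = aH [?F x1]" by auto
      from M1[OF x1(1)] ndx1[OF x1(1)] obtain x2 where x2: "x2 \<in> set s2" "label x1 = label x2"
        "aH (new m x1) = aH (new m x2)" by blast
      have yy: "y = aH [?F x2]" using x1(2) x2 nd_eq by metis
      have "?F x2 \<in> set (map ?F s2)" using x2(1) by simp
      then show "y \<in> (\<lambda>x. aH [x]) ` set (map ?F s2)" using yy by blast
    next
      fix y assume "y \<in> (\<lambda>x. aH [x]) ` set (map ?F s2)"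
      then obtain x1 where x1: "x1 \<in> set s2" "y = aH [?F x1]" by auto
      from M2[OF x1(1)] ndx2[OF x1(1)] obtain x2 where x2: "x2 \<in> set s1" "label x1 = label x2"
        "aH (new m x1) = aH (new m x2)" by blast
      have yy: "y = aH [?F x2]" using x1(2) x2 nd_eq by metis
      have "?F x2 \<in> set (map ?F s1)" using x2(1) by simp
      then show "y \<in> (\<lambda>x. aH [x]) ` set (map ?F s1)" using yy by blast
    qed
    then show ?thesis unfolding T_Suc' by (rule hom_set_eq[OF hom1 idem1])
  qed
  show "sim (Suc m) (relA (T (Suc m) s1)) (relA (T (Suc m) s2)) \<and>
       deep (Suc m) s1 = deep (Suc m) s2 \<and>
       (\<not> deep (Suc m) s1 \<longrightarrow> aH (T (Suc m) s1) = aH (T (Suc m) s2))"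
    using S D A by blast
qed

lemma Pm_all: "Pm (Suc m)"
proof (induction m)
  case 0 then show ?case using Pm_Suc by simp
next
  case (Suc m) then show ?case using Pm_Suc by simp
qed

end


locale L6b = L6 +
  assumes G2cl: "G2 \<in> reach_classes V2"
begin

lemma reach2_refl: "reach V2 h h" using fa_reach_refl[OF fa2] .
lemma reach2_trans: "reach V2 a b \<Longrightarrow> reach V2 b d \<Longrightarrow> reach V2 a d"
  using fa_reach_trans[OF fa2] by blast

lemma classlem: assumes "g \<in> G2" "reach V2 g h" shows "h \<in> G2 \<or> above V2 h G2"
proof -
  obtain h0 where h0: "G2 = reach_class_of V2 h0" using G2cl unfolding reach_classes_def by blast
  have g: "reach V2 h0 g" "reach V2 g h0" using assms(1) h0 unfolding reach_class_of_def by auto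
  show ?thesis
  proof (cases "reach V2 h g")
    case True
    then have "h \<in> G2" using h0 g assms(2) reach2_trans unfolding reach_class_of_def by blast
    then show ?thesis by blast
  next
    case False
    have "above V2 h G2" unfolding above_def
    proof
      fix g' assume "g' \<in> G2"
      then have g': "reach V2 h0 g'" "reach V2 g' h0" using h0 unfolding reach_class_of_def by auto
      have "reach V2 g' h" using g'(2) g(1) assms(2) reach2_trans by blast
      moreover have "\<not> reach V2 h g'" using False g'(2) g(1) reach2_trans by blast
      ultimately show "reach V2 g' h \<and> \<not> reach V2 h g'" by blast
    qed
    then show ?thesis by blast
  qed
qed

lemma goodt_reach: "g \<in> G2 \<Longrightarrow> reach V2 g (bH [x]) \<Longrightarrow> goodt x"
proof (induction x arbitrary: g rule: tree.induct)
  case (Node a t)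
  have "bH [Node a t] = bV (CNode [] a (Hole [] []) []) (bH t)" using hom_node[OF hom2] .
  then have "reach V2 (bH [Node a t]) (bH t)" unfolding reach_def using hom_in[OF hom2] by blast
  then have rt: "reach V2 g (bH t)" using Node.prems reach2_trans by blast
  have "goodt y" if y: "y \<in> set t" for y
  proof -
    obtain l r where "t = l @ y # r" using y by (meson split_list)
    then have "bH t = bV (Hole l r) (bH [y])" using hom_elem[OF hom2] by simp
    then have "reach V2 (bH t) (bH [y])" unfolding reach_def using hom_in[OF hom2] by blast
    then show ?thesis using Node.IH[OF y Node.prems(1)] rt reach2_trans by blast
  qed
  then show ?case using classlem[OF Node.prems(1) rt] by simp
qed

lemma good_forest: "bH s \<in> G2 \<Longrightarrow> \<forall>x\<in>set s. goodt x"
proof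
  fix x assume s: "bH s \<in> G2" and x: "x \<in> set s"
  obtain l r where "s = l @ x # r" using x by (meson split_list)
  then have "bH s = bV (Hole l r) (bH [x])" using hom_elem[OF hom2] by simp
  then have "reach V2 (bH s) (bH [x])" unfolding reach_def using hom_in[OF hom2] by blast
  then show "goodt x" using goodt_reach s by blast
qed

lemma final:
  assumes k: "0 < k" and sm: "sim k (relB s1) (relB s2)" and b1: "bH s1 \<in> G2" and b2: "bH s2 \<in> G2"
    and nc: "\<forall>s1 s2. equiv_k aH V1 k E s1 s2 \<longrightarrow> aH s1 = aH s2"
  shows "bH s1 = bH s2"
proof -
  obtain m where km: "k = Suc m" using k by (cases k) auto
  have g1: "\<forall>x\<in>set s1. goodt x" and g2: "\<forall>x\<in>set s2. goodt x" using good_forest b1 b2 by auto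
  have P: "sim k (relA (T k s1)) (relA (T k s2)) \<and> deep k s1 = deep k s2
     \<and> (\<not> deep k s1 \<longrightarrow> aH (T k s1) = aH (T k s2))"
    using Pm_all[of m] g1 g2 sm km unfolding Pm_def by blast
  have A: "aH (T k s1) = aH (T k s2)"
  proof (cases "deep k s1")
    case True
    then have "aH (T k s1) \<in> E" "aH (T k s2) \<in> E" using inE g1 g2 b1 b2 P by auto
    then have "equiv_k aH V1 k E (T k s1) (T k s2)" using P unfolding equiv_k_def by blast
    then show ?thesis using nc by blast
  next
    case False then show ?thesis using P by blast
  qed
  have "bH s1 = bH (T k s1)" using bH_T by simp
  also have "\<dots> = pi (aH (T k s1))" using piH by simp
  also have "\<dots> = pi (aH (T k s2))" using A by simp
  also have "\<dots> = bH s2" using piH bH_T by simp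
  finally show ?thesis .
qed

end


theorem lemma6:
  fixes aH :: "('a::finite) forest \<Rightarrow> 'h1::{comm_monoid_add,finite}"
    and aV :: "'a ctx \<Rightarrow> 'h1 \<Rightarrow> 'h1"
    and V1 :: "('h1 \<Rightarrow> 'h1) set"
    and bH :: "'a forest \<Rightarrow> 'h2::{comm_monoid_add,finite}"
    and bV :: "'a ctx \<Rightarrow> 'h2 \<Rightarrow> 'h2"
    and V2 :: "('h2 \<Rightarrow> 'h2) set"
  assumes "forest_algebra V1" and "forest_algebra V2"
    and "\<forall>x::'h1. x + x = x" and "\<forall>x::'h2. x + x = x"
    and "fa_hom aH aV V1" and "fa_onto aH aV V1"
    and "fa_hom bH bV V2" and "fa_onto bH bV V2"
    and "factors_through bH bV aH aV"
    and "nonconfusing aH V1"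
  shows "nonconfusing bH V2"
proof -
  note fa1 = assms(1) and fa2 = assms(2) and idem1 = assms(3) and hom1 = assms(5)
    and hom2 = assms(7)
  have surjA: "surj aH" and rA: "range aV = V1" using assms(6) unfolding fa_onto_def by auto
  have surjB: "surj bH" and rB: "range bV = V2" using assms(8) unfolding fa_onto_def by auto
  obtain k0 where k0: "k0 > 0" and nc: "\<forall>\<Gamma>\<in>reach_classes V1. \<forall>s1 s2.
      equiv_k aH V1 k0 \<Gamma> s1 s2 \<longrightarrow> aH s1 = aH s2"
    using assms(10) unfolding nonconfusing_def by blast
  define pi where "pi h = bH (SOME s. aH s = h)" for h
  have piH: "bH s = pi (aH s)" for s
  proof -
    have "aH (SOME s'. aH s' = aH s) = aH s" by (rule someI_ex) blast
    then show ?thesis using assms(9) unfolding factors_through_def pi_def by metis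
  qed
  show ?thesis unfolding nonconfusing_def
  proof (intro exI[of _ k0] conjI ballI allI impI)
    show "0 < k0" using k0 .
    fix G2 s1 s2
    assume G2cl: "G2 \<in> reach_classes V2" and eq: "equiv_k bH V2 k0 G2 s1 s2"
    obtain h0 where h0: "G2 = reach_class_of V2 h0" using G2cl unfolding reach_classes_def by blast
    have h0G: "h0 \<in> G2" using h0 fa_reach_refl[OF fa2] unfolding reach_class_of_def by auto
    obtain s0 where "bH s0 = h0" using surjB by (metis surjD)
    then have P0: "pi (aH s0) \<in> G2" using piH h0G by simp
    obtain e0 where e0: "pi e0 \<in> G2"
      and e0min: "\<forall>e. pi e \<in> G2 \<longrightarrow> card {g. reach V1 g e0} \<le> card {g. reach V1 g e}"
      using ex_has_least_nat[of "\<lambda>e. pi e \<in> G2" "aH s0" "\<lambda>e. card {g. reach V1 g e}"] P0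
      by blast
    define E where "E = reach_class_of V1 e0"
    have e0E: "e0 \<in> E" using fa_reach_refl[OF fa1] unfolding E_def reach_class_of_def by auto
    have Emin: "h \<in> E" if e: "e \<in> E" and r: "reach V1 h e" and p: "pi h \<in> G2" for e h
    proof -
      have he0: "reach V1 h e0" using e r fa_reach_trans[OF fa1] unfolding E_def reach_class_of_def by blast
      have sub: "{g. reach V1 g h} \<subseteq> {g. reach V1 g e0}" using he0 fa_reach_trans[OF fa1] by blast
      have "card {g. reach V1 g e0} \<le> card {g. reach V1 g h}" using e0min p by blast
      then have "{g. reach V1 g h} = {g. reach V1 g e0}"
        using card_subset_eq[OF _ sub] by (simp add: le_antisym card_mono sub)
      then have "reach V1 e0 h" using fa_reach_refl[OF fa1] by blast
      then show ?thesis using he0 unfolding E_def reach_class_of_def by blast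
    qed
    define c where "c h = (SOME s. bH s = h)" for h
    have cdef: "bH (c h) = h" for h unfolding c_def by (rule someI_ex) (metis surjB surjD)
    have wex: "\<exists>s. bH s = h \<and> (h \<in> G2 \<longrightarrow> aH s \<in> E)" for h
    proof (cases "h \<in> G2")
      case False then show ?thesis by (metis surjB surjD)
    next
      case True
      obtain f0 where f0: "aH f0 = e0" using surjA by (metis surjD)
      have "reach V2 h h0" using True h0 unfolding reach_class_of_def by auto
      moreover have "reach V2 h0 (pi e0)" using e0 h0 unfolding reach_class_of_def by auto
      ultimately have "reach V2 h (pi e0)" using fa_reach_trans[OF fa2] by blast
      then obtain v where v: "v \<in> V2" "h = v (pi e0)" unfolding reach_def by blast
      then obtain p where p: "v = bV p" using rB by blast
      have b: "bH (fill p f0) = h" using hom_fill[OF hom2] piH f0 v p by metis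
      have a: "aH (fill p f0) = aV p e0" using hom_fill[OF hom1] f0 by metis
      have "reach V1 (aH (fill p f0)) e0" unfolding reach_def a using hom_in[OF hom1] by blast
      moreover have "pi (aH (fill p f0)) \<in> G2" using b True piH by metis
      ultimately have "aH (fill p f0) \<in> E" using Emin e0E by blast
      then show ?thesis using b by blast
    qed
    define w where "w h = (SOME s. bH s = h \<and> (h \<in> G2 \<longrightarrow> aH s \<in> E))" for h
    have wdef: "bH (w h) = h \<and> (h \<in> G2 \<longrightarrow> aH (w h) \<in> E)" for h
      unfolding w_def by (rule someI_ex) (rule wex)
    interpret L: L6b aH aV V1 bH bV V2 G2 E pi c w
      by unfold_locales (use fa1 fa2 idem1 hom1 hom2 piH Emin cdef wdef G2cl in auto)
    have EC: "E \<in> reach_classes V1" unfolding E_def reach_classes_def by blast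
    show "bH s1 = bH s2"
      using L.final[OF k0] eq nc EC unfolding equiv_k_def by blast
  qed
qed


end
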